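(* Let $n\ge2$ and let $\mathsf u$ be a subword of $\bm\lambda_n$ with $u_1\cdots u_{n(n-1)}=e$. If $(\!(a,b)\!)$ is a reflection appearing in $\textsc{inv}(\mathsf u)$, then $|b-a|\le n-1$.
   Context: $\widetilde S_n$ is the group, under composition, of bijections $w:\mathbb Z\to\mathbb Z$ with $w(i+n)=w(i)+n$ and $\sum_{i=1}^n w(i)=\binom{n+1}2$. For $i\not\equiv j\pmod n$, $(\!(i,j)\!)$ is the reflection swapping $i+kn$ and $j+kn$ for all $k$; $(\!(i,j)\!)=(\!(j,i)\!)=(\!(i+kn,j+kn)\!)$, so $|j-i|$ depends only on the reflection. $s_i=(\!(i,i+1)\!)$ for $i\in\{0,\dots,n-1\}$. $\bm\lambda_n$ is the word $[s_0,\dots,s_{n-1}]$ repeated $n-1$ times with $j$-th letter $\sigma_j=s_{(j-1)\bmod n}$ (index in $\{0,\dots,n-1\}$). A subword is $\mathsf u=[u_1,\dots,u_{n(n-1)}]$ with $u_j\in\{\sigma_j,e\}$. Write $u_{(j)}=u_1\cdots u_j$ with $u_{(0)}=e$. $\textsc{inv}(\mathsf u)=[t_1,\dots,t_{n(n-1)}]$ with $t_j=u_{(j-1)}\sigma_j u_{(j-1)}^{-1}$. *)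

theory Defs
  imports Main
begin

text \<open>Elements of the affine symmetric group are represented as bijections int => int;
  the group operation is function composition.\<close>

text \<open>The reflection ((i,j)) of the affine symmetric group (meaningful when i, j are not
  congruent mod n): it swaps i + k n and j + k n for all integers k and fixes all other integers.\<close>
definition arefl :: "nat \<Rightarrow> int \<Rightarrow> int \<Rightarrow> (int \<Rightarrow> int)" where
  "arefl n i j = (\<lambda>x. if x mod int n = i mod int n then x + (j - i)
                      else if x mod int n = j mod int n then x + (i - j)
                      else x)"

definition asimple :: "nat \<Rightarrow> int \<Rightarrow> (int \<Rightarrow> int)" where
  "asimple n i = arefl n i (i + 1)"

text \<open>The j-th letter (j >= 1) of the word lambda_n: sigma_j = s_{(j-1) mod n}.\<close>
definition lam_letter :: "nat \<Rightarrow> nat \<Rightarrow> (int \<Rightarrow> int)" where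
  "lam_letter n j = asimple n ((int j - 1) mod int n)"

definition is_subword_lam :: "nat \<Rightarrow> (int \<Rightarrow> int) list \<Rightarrow> bool" where
  "is_subword_lam n u \<longleftrightarrow> length u = n * (n - 1) \<and>
     (\<forall>j < length u. u ! j = lam_letter n (Suc j) \<or> u ! j = id)"

definition uprefix :: "(int \<Rightarrow> int) list \<Rightarrow> nat \<Rightarrow> (int \<Rightarrow> int)" where
  "uprefix u j = foldr (\<circ>) (take j u) id"

definition inv_entry :: "nat \<Rightarrow> (int \<Rightarrow> int) list \<Rightarrow> nat \<Rightarrow> (int \<Rightarrow> int)" where
  "inv_entry n u j = uprefix u (j - 1) \<circ> lam_letter n j \<circ> inv (uprefix u (j - 1))"

end

theory Submission
  imports Defs
begin

lemma res_step:
  fixes m s x :: int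
  assumes "m \<ge> 2"
  shows "(s + 1 - x) mod m = (if (s - x) mod m = m - 1 then 0 else (s - x) mod m + 1)"
proof -
  have e: "(s + 1 - x) mod m = ((s - x) mod m + 1) mod m"
    by (metis add.commute add_diff_eq diff_add_eq mod_add_left_eq)
  have "0 \<le> (s - x) mod m" "(s - x) mod m < m" using assms by auto
  then show ?thesis unfolding e by (auto simp: mod_pos_pos_trivial)
qed

lemma res_ride:
  fixes m s x :: int
  assumes "m \<ge> 2" "x mod m = s mod m"
  shows "(s - x) mod m = 0"
proof -
  have "(s - x) mod m = (s mod m - x mod m) mod m" by (simp add: mod_diff_eq)
  then show ?thesis using assms by simp
qed

lemma res_jump:
  fixes m s x :: int
  assumes "m \<ge> 2" "x mod m = (s + 1) mod m"
  shows "(s - x) mod m = m - 1" "(s + 1 - (x - 1)) mod m = 1"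
proof -
  have "m dvd (s + 1 - x)" using assms by (metis mod_eq_dvd_iff)
  then obtain k where k: "s + 1 - x = m * k" by auto
  have m1: "(m - 1) mod m = m - 1" by (rule mod_pos_pos_trivial) (use assms in auto)
  have "s - x = (m - 1) + (k - 1) * m" using k by (simp add: algebra_simps)
  then have "(s - x) mod m = (m - 1) mod m" by (metis mod_mult_self1)
  then show "(s - x) mod m = m - 1" using m1 by simp
  have "s + 1 - (x - 1) = 1 + k * m" using k by (simp add: algebra_simps)
  then have "(s + 1 - (x - 1)) mod m = 1 mod m" by (metis mod_mult_self1)
  then show "(s + 1 - (x - 1)) mod m = 1" using assms by simp
qed

definition gf :: "int \<Rightarrow> int \<Rightarrow> int" where
  "gf m r = (if r = 0 then 0 else m - 1 - r)"
definition hf :: "int \<Rightarrow> int \<Rightarrow> int" where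
  "hf m r = (if r = 0 then 0 else r - 1)"

definition stepok :: "int \<Rightarrow> nat \<Rightarrow> int \<Rightarrow> int \<Rightarrow> bool" where
  "stepok m s x x' \<longleftrightarrow> x' = x \<or> (x mod m = int s mod m \<and> x' = x + 1)
      \<or> (x mod m = (int s + 1) mod m \<and> x' = x - 1)"

lemma fwd_step:
  fixes m :: int
  assumes m2: "m \<ge> 2" and st: "stepok m s x x'"
    and IH: "(m - 1) * (p0 - x) \<le> int s + gf m ((int s - x) mod m)"
  shows "(m - 1) * (p0 - x') \<le> int (Suc s) + gf m ((int (Suc s) - x') mod m)"
proof -
  define r where "r = (int s - x) mod m"
  have r0: "0 \<le> r" "r < m" using m2 by (auto simp: r_def)
  consider (stay) "x' = x" | (ride) "x mod m = int s mod m" "x' = x + 1"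
    | (jump) "x mod m = (int s + 1) mod m" "x' = x - 1"
    using st unfolding stepok_def by blast
  then show ?thesis
  proof cases
    case stay
    have rs: "(int s + 1 - x) mod m = (if r = m - 1 then 0 else r + 1)"
      using res_step[OF m2, of "int s" x] by (simp add: r_def)
    have "gf m r \<le> 1 + gf m (if r = m - 1 then 0 else r + 1)"
      using r0 m2 by (auto simp: gf_def)
    note ineq = this
    have e: "(int (Suc s) - x') mod m = (int s + 1 - x) mod m" using stay by (simp add: add.commute)
    have "(m - 1) * (p0 - x') \<le> int s + gf m r" using IH stay by (simp add: r_def)
    also have "\<dots> \<le> int (Suc s) + gf m (if r = m - 1 then 0 else r + 1)" using ineq by simp
    also have "\<dots> = int (Suc s) + gf m ((int (Suc s) - x') mod m)" using e rs by simp
    finally show ?thesis .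
  next
    case ride
    have "r = 0" using res_ride[OF m2 ride(1)] by (simp add: r_def)
    have e0: "int (Suc s) - x' = int s - x" using ride by simp
    have e: "(int (Suc s) - x') mod m = 0" unfolding e0 using \<open>r = 0\<close> by (simp add: r_def)
    have "(m - 1) * (p0 - x') = (m - 1) * (p0 - x) - (m - 1)" using ride by (simp add: algebra_simps)
    then show ?thesis using IH e \<open>r = 0\<close> m2 by (simp add: r_def gf_def)
  next
    case jump
    have "r = m - 1" using res_jump(1)[OF m2 jump(1)] by (simp add: r_def)
    have e: "(int (Suc s) - x') mod m = 1" using res_jump(2)[OF m2 jump(1)] jump by simp
    have "(m - 1) * (p0 - x') = (m - 1) * (p0 - x) + (m - 1)" unfolding jump(2) by (simp add: algebra_simps)
    then show ?thesis using IH e \<open>r = m - 1\<close> m2 by (simp add: r_def gf_def)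
  qed
qed

lemma bwd_step:
  fixes m :: int
  assumes m2: "m \<ge> 2" and st: "stepok m s x x'"
    and IH: "(m - 1) * (x' - p0) \<le> K - int (Suc s) + hf m ((int (Suc s) - x') mod m)"
  shows "(m - 1) * (x - p0) \<le> K - int s + hf m ((int s - x) mod m)"
proof -
  define r where "r = (int s - x) mod m"
  have r0: "0 \<le> r" "r < m" using m2 by (auto simp: r_def)
  consider (stay) "x' = x" | (ride) "x mod m = int s mod m" "x' = x + 1"
    | (jump) "x mod m = (int s + 1) mod m" "x' = x - 1"
    using st unfolding stepok_def by blast
  then show ?thesis
  proof cases
    case stay
    have rs: "(int s + 1 - x) mod m = (if r = m - 1 then 0 else r + 1)"
      using res_step[OF m2, of "int s" x] by (simp add: r_def)
    have "hf m (if r = m - 1 then 0 else r + 1) \<le> hf m r + 1"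
      using r0 m2 by (auto simp: hf_def)
    note ineq = this
    have e: "(int (Suc s) - x') mod m = (int s + 1 - x) mod m" using stay by (simp add: add.commute)
    have "(m - 1) * (x - p0) = (m - 1) * (x' - p0)" using stay by (simp add: add.commute)
    also have "\<dots> \<le> K - int (Suc s) + hf m ((int (Suc s) - x') mod m)" by (rule IH)
    also have "\<dots> = K - int (Suc s) + hf m (if r = m - 1 then 0 else r + 1)" using e rs by simp
    also have "\<dots> \<le> K - int s + hf m r" using ineq by simp
    finally show ?thesis by (simp add: r_def)
  next
    case ride
    have "r = 0" using res_ride[OF m2 ride(1)] by (simp add: r_def)
    have e0: "int (Suc s) - x' = int s - x" using ride by simp
    have e: "(int (Suc s) - x') mod m = 0" unfolding e0 using \<open>r = 0\<close> by (simp add: r_def)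
    have "(m - 1) * (x' - p0) = (m - 1) * (x - p0) + (m - 1)" using ride by (simp add: algebra_simps)
    then show ?thesis using IH e \<open>r = 0\<close> m2 by (simp add: r_def hf_def)
  next
    case jump
    have "r = m - 1" using res_jump(1)[OF m2 jump(1)] by (simp add: r_def)
    have e: "(int (Suc s) - x') mod m = 1" using res_jump(2)[OF m2 jump(1)] jump by simp
    have "(m - 1) * (x' - p0) = (m - 1) * (x - p0) - (m - 1)" unfolding jump(2) by (simp add: algebra_simps)
    then show ?thesis using IH e \<open>r = m - 1\<close> m2 by (simp add: r_def hf_def)
  qed
qed

lemma gf_nonneg: "m \<ge> 2 \<Longrightarrow> gf m (z mod m) \<ge> 0"
  by (auto simp: gf_def)

lemma hf_nonneg: "m \<ge> 2 \<Longrightarrow> hf m (z mod m) \<ge> 0"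
  by (auto simp: hf_def) (smt (verit) pos_mod_sign)

lemma fwd_all:
  fixes m :: int and P :: "nat \<Rightarrow> int"
  assumes m2: "m \<ge> 2" and st: "\<And>s. s < N \<Longrightarrow> stepok m s (P s) (P (Suc s))"
  shows "s \<le> N \<Longrightarrow> (m - 1) * (P 0 - P s) \<le> int s + gf m ((int s - P s) mod m)"
proof (induction s)
  case 0
  then show ?case using gf_nonneg[OF m2] by simp
next
  case (Suc s)
  then show ?case using fwd_step[OF m2 st[of s]] by simp
qed

lemma bwd_all:
  fixes m :: int and P :: "nat \<Rightarrow> int"
  assumes m2: "m \<ge> 2" and st: "\<And>s. s < N \<Longrightarrow> stepok m s (P s) (P (Suc s))"
    and en: "P N = P 0"
  shows "s \<le> N \<Longrightarrow> (m - 1) * (P s - P 0) \<le> int N - int s + hf m ((int s - P s) mod m)"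
proof (induction rule: inc_induct)
  case base
  then show ?case using hf_nonneg[OF m2] en by simp
next
  case (step k)
  then show ?case using bwd_step[OF m2 st[of k], of "P 0" "int N"] by simp
qed

lemma mod_succ_ne: "(m::int) \<ge> 2 \<Longrightarrow> z mod m \<noteq> (z + 1) mod m"
proof
  assume m: "m \<ge> 2" and "z mod m = (z + 1) mod m"
  then have "m dvd (z - (z + 1))" by (metis mod_eq_dvd_iff)
  then have "m dvd 1" by (metis dvd_minus_iff minus_diff_eq add_diff_cancel_left')
  then show False using m by (simp add: zdvd_imp_le)
qed

lemma arefl_invol:
  assumes "a mod int n \<noteq> b mod int n"
  shows "arefl n a b (arefl n a b x) = x"
proof -
  have k1: "(x + (b - a)) mod int n = b mod int n" if "x mod int n = a mod int n"
    by (metis that add.commute diff_add_cancel mod_add_right_eq add_diff_eq)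
  have k2: "(x + (a - b)) mod int n = a mod int n" if "x mod int n = b mod int n"
    by (metis that add.commute diff_add_cancel mod_add_right_eq add_diff_eq)
  show ?thesis using assms k1 k2 unfolding arefl_def by auto
qed

fun vv :: "(int \<Rightarrow> int) list \<Rightarrow> nat \<Rightarrow> int \<Rightarrow> int" where
  "vv u 0 = id"
| "vv u (Suc t) = (u ! t) \<circ> vv u t"

lemma foldr_comp: "foldr (\<circ>) xs g = foldr (\<circ>) xs id \<circ> g"
  by (induction xs) auto

lemma uprefix_Suc: "t < length u \<Longrightarrow> uprefix u (Suc t) = uprefix u t \<circ> u ! t"
  unfolding uprefix_def by (simp add: take_Suc_conv_app_nth foldr_comp[of _ "u ! t"])

lemma uprefix_vv:
  assumes inv: "\<And>k. k < length u \<Longrightarrow> u ! k \<circ> u ! k = id"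
  shows "t \<le> length u \<Longrightarrow> uprefix u t \<circ> vv u t = id \<and> vv u t \<circ> uprefix u t = id"
proof (induction t)
  case 0
  then show ?case by (simp add: uprefix_def)
next
  case (Suc t)
  then have t: "t < length u" by simp
  have IH: "uprefix u t \<circ> vv u t = id" "vv u t \<circ> uprefix u t = id" using Suc.IH t less_imp_le by blast+
  have "uprefix u (Suc t) \<circ> vv u (Suc t) = uprefix u t \<circ> (u ! t \<circ> u ! t) \<circ> vv u t"
    using uprefix_Suc[OF t] by (simp add: o_assoc)
  also have "\<dots> = id" using inv[OF t] IH by simp
  finally have 1: "uprefix u (Suc t) \<circ> vv u (Suc t) = id" .
  have "vv u (Suc t) \<circ> uprefix u (Suc t) = u ! t \<circ> (vv u t \<circ> uprefix u t) \<circ> u ! t"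
    using uprefix_Suc[OF t] by (simp add: o_assoc)
  also have "\<dots> = id" using inv[OF t] IH by simp
  finally have 2: "vv u (Suc t) \<circ> uprefix u (Suc t) = id" .
  show ?case using 1 2 by blast
qed

lemma lam_letter_Suc: "lam_letter n (Suc k) = arefl n (int k mod int n) (int k mod int n + 1)"
  unfolding lam_letter_def asimple_def by simp

lemma minus1_mod: "(m::int) \<ge> 2 \<Longrightarrow> (-1) mod m = m - 1"
proof -
  assume m: "m \<ge> 2"
  have "(-1::int) = (m - 1) + (-1) * m" by simp
  then have "(-1::int) mod m = (m - 1) mod m" by (metis mod_mult_self1)
  also have "\<dots> = m - 1" by (rule mod_pos_pos_trivial) (use m in auto)
  finally show ?thesis .
qed

lemma step_of_letter:
  assumes hu: "u ! s = lam_letter n (Suc s) \<or> u ! s = id"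
  shows "stepok (int n) s x ((u ! s) x)"
proof -
  define i where "i = int s mod int n"
  have i1: "i mod int n = int s mod int n" by (simp add: i_def)
  have i2: "(i + 1) mod int n = (int s + 1) mod int n" by (simp add: i_def mod_add_left_eq)
  from hu show ?thesis
  proof
    assume "u ! s = lam_letter n (Suc s)"
    then have "(u ! s) x = arefl n i (i + 1) x" by (simp add: lam_letter_Suc i_def)
    then show ?thesis unfolding stepok_def arefl_def using i1 i2 by auto
  next
    assume "u ! s = id" then show ?thesis by (simp add: stepok_def)
  qed
qed

theorem lemma5p13:
  fixes n :: nat and u :: "(int \<Rightarrow> int) list" and a b :: int and j :: nat
  assumes "n \<ge> 2"
    and "is_subword_lam n u"
    and "uprefix u (n * (n - 1)) = id"
    and "a mod int n \<noteq> b mod int n"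
    and "1 \<le> j" and "j \<le> n * (n - 1)"
    and "inv_entry n u j = arefl n a b"
  shows "\<bar>b - a\<bar> \<le> int n - 1"
proof -
  define m where "m = int n"
  define N where "N = n * (n - 1)"
  have m2: "m \<ge> 2" using assms(1) by (simp add: m_def)
  have NN: "int N = m * (m - 1)" using assms(1) by (simp add: N_def m_def of_nat_diff)
  have len: "length u = N" using assms(2) by (simp add: is_subword_lam_def N_def)
  have hu: "\<And>k. k < N \<Longrightarrow> u ! k = lam_letter n (Suc k) \<or> u ! k = id"
    using assms(2) len by (simp add: is_subword_lam_def)
  have invol: "u ! k \<circ> u ! k = id" if k: "k < length u" for k
  proof -
    from k have "u ! k = lam_letter n (Suc k) \<or> u ! k = id" using hu len by simp
    then show "u ! k \<circ> u ! k = id"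
    proof
      assume h: "u ! k = lam_letter n (Suc k)"
      have "(int k mod int n) mod int n \<noteq> (int k mod int n + 1) mod int n"
        using mod_succ_ne[OF m2, of "int k mod int n"] by (simp add: m_def)
      then show ?thesis unfolding h lam_letter_Suc by (simp add: fun_eq_iff arefl_invol)
    qed simp
  qed
  obtain t where t: "j = Suc t" using assms(5) by (cases j) auto
  have tN: "t < N" using assms(6) t N_def by simp
  define W where "W = uprefix u t"
  define V where "V = vv u t"
  have WV: "W \<circ> V = id" "V \<circ> W = id" using uprefix_vv[OF invol, of t] tN len
    by (auto simp: W_def V_def)
  have invW: "inv W = V" using inv_unique_comp[OF WV] .
  have ie: "inv_entry n u j = W \<circ> lam_letter n (Suc t) \<circ> V"
    using invW by (simp add: inv_entry_def t W_def)
  define A where "A = W (int t)"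
  define B where "B = W (int t + 1)"
  have VA: "V A = int t" using WV(2) unfolding A_def by (metis comp_apply id_apply)
  have VB: "V B = int t + 1" using WV(2) unfolding B_def by (metis comp_apply id_apply)
  have L: "lam_letter n (Suc t) (int t) = int t + 1"
    by (simp add: lam_letter_Suc arefl_def)
  have ab: "arefl n a b A = B"
    using fun_cong[OF assms(7), of A] ie VA L by (simp add: B_def)
  have AB: "A \<noteq> B" using VA VB by auto
  have diff: "B - A = b - a \<or> B - A = a - b"
    using ab AB unfolding arefl_def by (auto split: if_splits)
  have notm: "B - A \<noteq> m"
  proof
    assume "B - A = m"
    then have "b = a + m \<or> a = b + m" using diff by auto
    then show False using assms(4) by (auto simp: m_def)
  qed
  have vvN: "vv u N = id"
  proof -
    have "vv u N \<circ> uprefix u N = id" using uprefix_vv[OF invol, of N] len by simp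
    then show ?thesis using assms(3) by (simp add: N_def)
  qed
  define PA where "PA = (\<lambda>s. vv u s A)"
  define PB where "PB = (\<lambda>s. vv u s B)"
  have stA: "stepok m s (PA s) (PA (Suc s))" if "s < N" for s
    using step_of_letter[OF hu[OF that]] by (simp add: PA_def m_def)
  have stB: "stepok m s (PB s) (PB (Suc s))" if "s < N" for s
    using step_of_letter[OF hu[OF that]] by (simp add: PB_def m_def)
  have enA: "PA N = PA 0" by (simp add: PA_def vvN)
  have enB: "PB N = PB 0" by (simp add: PB_def vvN)
  have PAt: "PA t = int t" using VA by (simp add: PA_def V_def)
  have PBt: "PB t = int t + 1" using VB by (simp add: PB_def V_def)
  have PA0: "PA 0 = A" by (simp add: PA_def)
  have PB0: "PB 0 = B" by (simp add: PB_def)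
  have gf0: "gf m 0 = 0" by (simp add: gf_def)
  have gfm: "gf m (m - 1) = 0" using m2 by (simp add: gf_def)
  have hf0: "hf m 0 = 0" "hf m 1 = 0" by (simp_all add: hf_def)
  have hfm: "hf m (m - 1) = m - 2" using m2 by (simp add: hf_def)
  have m1: "(-1) mod m = m - 1" using minus1_mod[OF m2] .
  have f3: "(m - 1) * (PA 0 - PA t) \<le> int t + gf m ((int t - PA t) mod m)"
    by (rule fwd_all[OF m2 stA]) (use tN in auto)
  have h3: "(m - 1) * (A - int t) \<le> int t"
    using f3 PAt PA0 gf0 by simp
  have f1: "(m - 1) * (PB 0 - PB t) \<le> int t + gf m ((int t - PB t) mod m)"
    by (rule fwd_all[OF m2 stB]) (use tN in auto)
  have h1: "(m - 1) * (B - (int t + 1)) \<le> int t"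
    using f1 PBt PB0 gfm m1 by simp
  have f4: "(m - 1) * (PB t - PB 0) \<le> int N - int t + hf m ((int t - PB t) mod m)"
    by (rule bwd_all[OF m2 stB enB]) (use tN in auto)
  have h4: "(m - 1) * (int t + 1 - B) \<le> int N - int t + (m - 2)"
    using f4 PBt PB0 hfm m1 by simp
  have h2: "(m - 1) * (int t - A) \<le> int N - int t - 1"
  proof -
    have bw: "(m - 1) * (PA (Suc t) - A) \<le> int N - int (Suc t) + hf m ((int (Suc t) - PA (Suc t)) mod m)"
      using bwd_all[OF m2 stA enA, where s="Suc t"] tN PA0 by simp
    consider (stay) "PA (Suc t) = int t"
      | (ride) "PA (Suc t) = int t + 1"
      | (jump) "int t mod m = (int t + 1) mod m"
      using stA[OF tN] PAt unfolding stepok_def by auto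
    then show ?thesis
    proof cases
      case stay
      then show ?thesis using bw hf0 m2 by simp
    next
      case ride
      have "(m - 1) * (int t + 1 - A) = (m - 1) * (int t - A) + (m - 1)" by (simp add: algebra_simps)
      then show ?thesis using bw ride hf0 m2 by simp
    next
      case jump
      then show ?thesis using mod_succ_ne[OF m2] by blast
    qed
  qed
  have up: "B - A \<le> m - 1"
  proof (rule ccontr)
    assume "\<not> B - A \<le> m - 1"
    then have "B - A - 1 \<ge> m" using notm by simp
    then have "(m - 1) * m \<le> (m - 1) * (B - A - 1)" using m2 by (intro mult_left_mono) auto
    moreover have "(m - 1) * (B - A - 1) = (m - 1) * (B - (int t + 1)) + (m - 1) * (int t - A)"
      by (simp add: algebra_simps)
    ultimately show False using h1 h2 NN by (simp add: algebra_simps)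
  qed
  have lo: "A - B \<le> m - 1"
  proof (rule ccontr)
    assume "\<not> A - B \<le> m - 1"
    then have "A - B + 1 \<ge> m + 1" by simp
    then have "(m - 1) * (m + 1) \<le> (m - 1) * (A - B + 1)" using m2 by (intro mult_left_mono) auto
    moreover have "(m - 1) * (A - B + 1) = (m - 1) * (A - int t) + (m - 1) * (int t + 1 - B)"
      by (simp add: algebra_simps)
    ultimately show False using h3 h4 NN by (simp add: algebra_simps)
  qed
  have "\<bar>b - a\<bar> = \<bar>B - A\<bar>" using diff by auto
  then show ?thesis using up lo by (simp add: m_def)
qed

end
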